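(* Let $F(u,v)=F(u,v;t)=\sum_{p,q\ge1}f_{p,q}(t)u^pv^q$, where $f_{p,q}(t)=\sum_{n\ge1}t^n\,|\{e\in\mathbf{I}_n(201,210): e\text{ has parameters }(p,q)\}|$. Then $$F(u,v)=tuv+t\left(\frac{uF(u,v)-vF(v,v)}{1-v/u}+u^2v\left(\left.\frac{\partial F(u,v)}{\partial v}\right|_{v=1}-F(u,1)\right)\right).$$ Equivalently, writing $F(u,v)=\sum_{n\ge1}f_n(u,v)t^n$, we have $f_1(u,v)=uv$ and for $n\ge2$ $$f_n(u,v)=\frac{uf_{n-1}(u,v)-vf_{n-1}(v,v)}{1-v/u}+u^2v\left(\left.\frac{\partial f_{n-1}(u,v)}{\partial v}\right|_{v=1}-f_{n-1}(u,1)\right).$$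
   Context: $\mathbf{I}_n=\{(e_1,\dots,e_n)\in\mathbb{N}^n:0\le e_i<i\}$. $\mathbf{I}_n(201,210)$ is the set of $e\in\mathbf{I}_n$ with no indices $i<j<k$ such that $e_j<e_k<e_i$ and no indices $i<j<k$ such that $e_i>e_j>e_k$. The parameters of $e\in\mathbf{I}_n(201,210)$ are $(p,q)$ where $p=|\{k>e_n:(e_1,\dots,e_n,k)\in\mathbf{I}_{n+1}(201,210)\}|$ and $q=|\{k\le e_n:(e_1,\dots,e_n,k)\in\mathbf{I}_{n+1}(201,210)\}|$. *)

theory Defs
  imports "HOL-Analysis.Analysis"
begin

text \<open>Inversion sequences of length n, as lists e = [e_1,...,e_n] (0-indexed: e!i \<le> i,
  i.e. 0 \<le> e_(i+1) < i+1).\<close>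
definition inv_seq :: "nat \<Rightarrow> nat list set" where
  "inv_seq n = {e. length e = n \<and> (\<forall>i<n. e ! i < Suc i)}"

definition avoids_201_210 :: "nat list \<Rightarrow> bool" where
  "avoids_201_210 e \<longleftrightarrow>
     \<not> (\<exists>i j k. i < j \<and> j < k \<and> k < length e \<and> e!j < e!k \<and> e!k < e!i) \<and>
     \<not> (\<exists>i j k. i < j \<and> j < k \<and> k < length e \<and> e!i > e!j \<and> e!j > e!k)"

definition I201_210 :: "nat \<Rightarrow> nat list set" where
  "I201_210 n = {e \<in> inv_seq n. avoids_201_210 e}"

definition par_p :: "nat list \<Rightarrow> nat" where
  "par_p e = card {k. k > last e \<and> e @ [k] \<in> I201_210 (Suc (length e))}"

definition par_q :: "nat list \<Rightarrow> nat" where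
  "par_q e = card {k. k \<le> last e \<and> e @ [k] \<in> I201_210 (Suc (length e))}"

text \<open>f_n(u,v) = \<Sum>_{p,q\<ge>1} |{e \<in> I_n(201,210) with parameters (p,q)}| u^p v^q,
  written as a sum over the sequences themselves.\<close>
definition fn :: "nat \<Rightarrow> real \<Rightarrow> real \<Rightarrow> real" where
  "fn n u v = (\<Sum>e \<in> {e \<in> I201_210 n. par_p e \<ge> 1 \<and> par_q e \<ge> 1}. u ^ par_p e * v ^ par_q e)"

end

theory Submission
  imports Defs
begin

definition okk :: "nat list \<Rightarrow> nat \<Rightarrow> bool" where
  "okk e k \<longleftrightarrow> (\<forall>i j. i < j \<and> j < length e \<and> e!i > e!j \<longrightarrow> e!i \<le> k \<or> k = e!j)"

definition SS :: "nat list \<Rightarrow> nat set" where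
  "SS e = {k. e @ [k] \<in> I201_210 (Suc (length e))}"

lemma I_len: "e \<in> I201_210 n \<Longrightarrow> length e = n"
  by (simp add: I201_210_def inv_seq_def)

lemma av201: "avoids_201_210 e \<Longrightarrow> i < j \<Longrightarrow> j < l \<Longrightarrow> l < length e \<Longrightarrow> e!j < e!l \<Longrightarrow> e!l < e!i \<Longrightarrow> False"
  unfolding avoids_201_210_def by blast
lemma av210: "avoids_201_210 e \<Longrightarrow> i < j \<Longrightarrow> j < l \<Longrightarrow> l < length e \<Longrightarrow> e!i > e!j \<Longrightarrow> e!j > e!l \<Longrightarrow> False"
  unfolding avoids_201_210_def by blast
lemma avI: "(\<And>i j l. i < j \<Longrightarrow> j < l \<Longrightarrow> l < length e \<Longrightarrow> e!j < e!l \<Longrightarrow> e!l < e!i \<Longrightarrow> False)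
  \<Longrightarrow> (\<And>i j l. i < j \<Longrightarrow> j < l \<Longrightarrow> l < length e \<Longrightarrow> e!i > e!j \<Longrightarrow> e!j > e!l \<Longrightarrow> False)
  \<Longrightarrow> avoids_201_210 e"
  unfolding avoids_201_210_def by blast

lemma avoids_app: "avoids_201_210 (e @ [k]) \<longleftrightarrow> avoids_201_210 e \<and> okk e k"
proof
  assume A: "avoids_201_210 (e @ [k])"
  have "avoids_201_210 e"
  proof (rule avI)
    fix i j l assume h: "i < j" "j < l" "l < length e" "e!j < e!l" "e!l < e!i"
    have "(e@[k])!i = e!i" "(e@[k])!j = e!j" "(e@[k])!l = e!l" using h by (auto simp: nth_append)
    then show False using av201[OF A, of i j l] h by simp
  next
    fix i j l assume h: "i < j" "j < l" "l < length e" "e!i > e!j" "e!j > e!l"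
    have "(e@[k])!i = e!i" "(e@[k])!j = e!j" "(e@[k])!l = e!l" using h by (auto simp: nth_append)
    then show False using av210[OF A, of i j l] h by simp
  qed
  moreover have "okk e k"
    unfolding okk_def
  proof (intro allI impI)
    fix i j assume h: "i < j \<and> j < length e \<and> e!i > e!j"
    show "e!i \<le> k \<or> k = e!j"
    proof (rule ccontr)
      assume c: "\<not> (e!i \<le> k \<or> k = e!j)"
      have ei: "(e@[k])!i = e!i" "(e@[k])!j = e!j" "(e@[k])!(length e) = k"
        using h by (auto simp: nth_append)
      have l: "length e < length (e@[k])" by simp
      show False
      proof (cases "e!j < k")
        case True
        then show ?thesis using av201[OF A, of i j "length e"] c h ei l by simp
      next
        case False
        then have "k < e!j" using c by auto
        then show ?thesis using av210[OF A, of i j "length e"] c h ei l by simp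
      qed
    qed
  qed
  ultimately show "avoids_201_210 e \<and> okk e k" by blast
next
  assume B: "avoids_201_210 e \<and> okk e k"
  then have B1: "avoids_201_210 e" and B2: "okk e k" by auto
  show "avoids_201_210 (e @ [k])"
  proof (rule avI)
    fix i j l assume h: "i < j" "j < l" "l < length (e@[k])" "(e@[k]) ! j < (e@[k]) ! l" "(e@[k]) ! l < (e@[k]) ! i"
    show False
    proof (cases "l < length e")
      case True
      have "(e@[k])!i = e!i" "(e@[k])!j = e!j" "(e@[k])!l = e!l" using h True by (auto simp: nth_append)
      then show ?thesis using av201[OF B1, of i j l] h True by simp
    next
      case False
      then have "l = length e" using h by simp
      then have "(e@[k])!i = e!i" "(e@[k])!j = e!j" "(e@[k])!l = k" using h by (auto simp: nth_append)
      moreover have "j < length e" using h \<open>l = length e\<close> by simp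
      ultimately show ?thesis using B2 h unfolding okk_def by force
    qed
  next
    fix i j l assume h: "i < j" "j < l" "l < length (e@[k])" "(e@[k]) ! i > (e@[k]) ! j" "(e@[k]) ! j > (e@[k]) ! l"
    show False
    proof (cases "l < length e")
      case True
      have "(e@[k])!i = e!i" "(e@[k])!j = e!j" "(e@[k])!l = e!l" using h True by (auto simp: nth_append)
      then show ?thesis using av210[OF B1, of i j l] h True by simp
    next
      case False
      then have "l = length e" using h by simp
      then have "(e@[k])!i = e!i" "(e@[k])!j = e!j" "(e@[k])!l = k" using h by (auto simp: nth_append)
      moreover have "j < length e" using h \<open>l = length e\<close> by simp
      ultimately show ?thesis using B2 h unfolding okk_def by force
    qed
  qed
qed

lemma inv_app: "e @ [k] \<in> inv_seq (Suc (length e)) \<longleftrightarrow> e \<in> inv_seq (length e) \<and> k \<le> length e"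
  unfolding inv_seq_def
  by (auto simp: nth_append less_Suc_eq)

lemma app_iff: "e @ [k] \<in> I201_210 (Suc (length e)) \<longleftrightarrow> e \<in> I201_210 (length e) \<and> k \<le> length e \<and> okk e k"
  unfolding I201_210_def using inv_app avoids_app by auto


lemma okk_app: "okk (e@[k]) x \<longleftrightarrow> okk e x \<and> (\<forall>i<length e. e!i > k \<longrightarrow> e!i \<le> x \<or> x = k)"
proof
  assume A: "okk (e@[k]) x"
  show "okk e x \<and> (\<forall>i<length e. e!i > k \<longrightarrow> e!i \<le> x \<or> x = k)"
  proof
    show "okk e x" unfolding okk_def
    proof (intro allI impI)
      fix i j assume h: "i < j \<and> j < length e \<and> e!i > e!j"
      then have "i < j \<and> j < length (e@[k]) \<and> (e@[k])!i > (e@[k])!j" by (auto simp: nth_append)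
      with A have "(e@[k])!i \<le> x \<or> x = (e@[k])!j" unfolding okk_def by blast
      with h show "e!i \<le> x \<or> x = e!j" by (auto simp: nth_append)
    qed
    show "\<forall>i<length e. e!i > k \<longrightarrow> e!i \<le> x \<or> x = k"
    proof (intro allI impI)
      fix i assume h: "i < length e" "e!i > k"
      then have "i < length e \<and> length e < length (e@[k]) \<and> (e@[k])!i > (e@[k])!(length e)" by (auto simp: nth_append)
      with A have "(e@[k])!i \<le> x \<or> x = (e@[k])!(length e)" unfolding okk_def by blast
      with h show "e!i \<le> x \<or> x = k" by (auto simp: nth_append)
    qed
  qed
next
  assume B: "okk e x \<and> (\<forall>i<length e. e!i > k \<longrightarrow> e!i \<le> x \<or> x = k)"
  show "okk (e@[k]) x" unfolding okk_def
  proof (intro allI impI)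
    fix i j assume h: "i < j \<and> j < length (e@[k]) \<and> (e@[k])!i > (e@[k])!j"
    show "(e@[k])!i \<le> x \<or> x = (e@[k])!j"
    proof (cases "j < length e")
      case True
      have hh: "(e@[k])!i = e!i" "(e@[k])!j = e!j" using h True by (auto simp: nth_append)
      then have "i<j \<and> j<length e \<and> e!i > e!j" using h True by auto
      then have "e!i \<le> x \<or> x = e!j" using B unfolding okk_def by blast
      then show ?thesis using hh by simp
    next
      case False
      then have "j = length e" using h by simp
      then show ?thesis using B h by (auto simp: nth_append)
    qed
  qed
qed

lemma SS_char: "e \<in> I201_210 m \<Longrightarrow> SS e = {k. k \<le> m \<and> okk e k}"
  unfolding SS_def using app_iff I_len by auto

lemma SS_fin: "finite (SS e)"
proof -
  have "SS e \<subseteq> {..length e}" unfolding SS_def using app_iff by auto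
  then show ?thesis using finite_subset by blast
qed

lemma I_elem_le: "e \<in> I201_210 m \<Longrightarrow> i < m \<Longrightarrow> e!i \<le> i"
  unfolding I201_210_def inv_seq_def by auto

lemma m_in_SS: assumes "e \<in> I201_210 m" shows "m \<in> SS e"
proof -
  have "okk e m" unfolding okk_def
  proof (intro allI impI)
    fix i j assume h: "i < j \<and> j < length e \<and> e!i > e!j"
    then have "i < m" using I_len[OF assms] by simp
    then have "e!i \<le> i" using I_elem_le[OF assms] by simp
    then show "e!i \<le> m \<or> m = e!j" using \<open>i < m\<close> by simp
  qed
  then show ?thesis using SS_char[OF assms] by simp
qed

lemma last_in_SS: assumes e: "e \<in> I201_210 m" and m: "m \<ge> 1" shows "last e \<in> SS e"
proof -
  have len: "length e = m" using I_len[OF e] .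
  have ne: "e \<noteq> []" using len m by auto
  have lst: "last e = e!(m-1)" using len ne by (simp add: last_conv_nth)
  have av: "avoids_201_210 e" using e unfolding I201_210_def by auto
  have "okk e (last e)" unfolding okk_def
  proof (intro allI impI)
    fix i j assume h: "i < j \<and> j < length e \<and> e!i > e!j"
    show "e!i \<le> last e \<or> last e = e!j"
    proof (cases "j = m - 1")
      case True then show ?thesis using lst by simp
    next
      case False
      then have j: "j < m - 1" using h len by auto
      show ?thesis
      proof (rule ccontr)
        assume c: "\<not> (e!i \<le> last e \<or> last e = e!j)"
        then have c1: "e!(m-1) < e!i" "e!(m-1) \<noteq> e!j" using lst by auto
        have ml: "m - 1 < length e" using len m by simp
        show False
        proof (cases "e!j < e!(m-1)")
          case True
          then show False using av201[OF av, of i j "m-1"] h j ml c1 by simp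
        next
          case False
          then have "e!(m-1) < e!j" using c1 by auto
          then show False using av210[OF av, of i j "m-1"] h j ml c1 by simp
        qed
      qed
    qed
  qed
  moreover have "last e \<le> m" using I_elem_le[OF e, of "m-1"] lst m by simp
  ultimately show ?thesis using SS_char[OF e] by simp
qed


lemma okk_big: "e \<in> I201_210 m \<Longrightarrow> m \<le> x \<Longrightarrow> okk e x"
  unfolding okk_def
proof (intro allI impI)
  fix i j assume e: "e \<in> I201_210 m" and x: "m \<le> x" and h: "i < j \<and> j < length e \<and> e!i > e!j"
  then have "i < m" using I_len[OF e] by simp
  then have "e!i \<le> i" using I_elem_le[OF e] by simp
  then show "e!i \<le> x \<or> x = e!j" using \<open>i < m\<close> x by simp
qed

lemma last_nth: assumes e: "e \<in> I201_210 m" and m: "m \<ge> 1" shows "last e = e!(m-1)"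
proof -
  have len: "length e = m" using I_len[OF e] .
  have ne: "e \<noteq> []" using len m by auto
  show ?thesis using len ne by (simp add: last_conv_nth)
qed

lemma last_lt: assumes e: "e \<in> I201_210 m" and m: "m \<ge> 1" shows "last e < m"
  using I_elem_le[OF e, of "m-1"] last_nth[OF e m] m by simp

lemma child_I: "e \<in> I201_210 m \<Longrightarrow> k \<in> SS e \<Longrightarrow> e @ [k] \<in> I201_210 (Suc m)"
  unfolding SS_def using I_len by auto

lemma SS_child_ge:
  assumes e: "e \<in> I201_210 m" and m: "m \<ge> 1" and k: "k \<in> SS e" and ak: "last e \<le> k"
  shows "SS (e@[k]) = insert (Suc m) (SS e)"
proof -
  have ek: "e@[k] \<in> I201_210 (Suc m)" using child_I[OF e k] .
  have kS: "k \<le> m" "okk e k" using k SS_char[OF e] by auto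
  have len: "length e = m" using I_len[OF e] .
  have lst: "last e = e!(m-1)" using last_nth[OF e m] .
  have D: "\<forall>i<length e. e!i > k \<longrightarrow> e!i \<le> x \<or> x = k" if ox: "okk e x" for x
  proof (intro allI impI)
    fix i assume i: "i < length e" "e!i > k"
    have "i \<noteq> m - 1" using i ak lst by auto
    then have i2: "i < m - 1" using i len by auto
    have pair: "i < m-1 \<and> m-1 < length e \<and> e!i > e!(m-1)" using i2 len m i ak lst by auto
    then have "e!i \<le> k \<or> k = e!(m-1)" using kS(2) unfolding okk_def by blast
    then have "k = e!(m-1)" using i by auto
    moreover have "e!i \<le> x \<or> x = e!(m-1)" using pair ox unfolding okk_def by blast
    ultimately show "e!i \<le> x \<or> x = k" by auto
  qed
  show ?thesis
  proof (rule set_eqI)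
    fix x
    have "x \<in> SS (e@[k]) \<longleftrightarrow> x \<le> Suc m \<and> okk (e@[k]) x" using SS_char[OF ek] by auto
    also have "\<dots> \<longleftrightarrow> x \<le> Suc m \<and> okk e x" using okk_app D by blast
    also have "\<dots> \<longleftrightarrow> x \<in> insert (Suc m) (SS e)"
      using SS_char[OF e] okk_big[OF e, of "Suc m"] by auto
    finally show "x \<in> SS (e@[k]) \<longleftrightarrow> x \<in> insert (Suc m) (SS e)" .
  qed
qed

lemma SS_child_lt:
  assumes e: "e \<in> I201_210 m" and m: "m \<ge> 1" and k: "k \<in> SS e" and ak: "k < last e"
  shows "SS (e@[k]) = insert k (insert (Suc m) {x \<in> SS e. last e \<le> x})"
proof -
  have ek: "e@[k] \<in> I201_210 (Suc m)" using child_I[OF e k] .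
  have kS: "k \<le> m" "okk e k" using k SS_char[OF e] by auto
  have len: "length e = m" using I_len[OF e] .
  have lst: "last e = e!(m-1)" using last_nth[OF e m] .
  have small: "e!i \<le> last e" if i: "i < m" for i
  proof (rule ccontr)
    assume c: "\<not> e!i \<le> last e"
    then have "i \<noteq> m - 1" using lst by auto
    then have "i < m-1 \<and> m-1 < length e \<and> e!i > e!(m-1)" using i c len lst by auto
    then have "e!i \<le> k \<or> k = e!(m-1)" using kS(2) unfolding okk_def by blast
    then show False using c ak lst by auto
  qed
  show ?thesis
  proof (rule set_eqI)
    fix x
    have "x \<in> SS (e@[k]) \<longleftrightarrow> x \<le> Suc m \<and> okk (e@[k]) x" using SS_char[OF ek] by auto
    also have "\<dots> \<longleftrightarrow> x \<le> Suc m \<and> okk e x \<and> (\<forall>i<m. e!i > k \<longrightarrow> e!i \<le> x \<or> x = k)"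
      using okk_app len by blast
    also have "\<dots> \<longleftrightarrow> x \<in> insert k (insert (Suc m) {x \<in> SS e. last e \<le> x})"
    proof
      assume h: "x \<le> Suc m \<and> okk e x \<and> (\<forall>i<m. e!i > k \<longrightarrow> e!i \<le> x \<or> x = k)"
      have "m - 1 < m" using m by simp
      then have "k < e!(m-1) \<longrightarrow> e!(m-1) \<le> x \<or> x = k" using h by blast
      then have "last e \<le> x \<or> x = k" using ak lst by simp
      then show "x \<in> insert k (insert (Suc m) {x \<in> SS e. last e \<le> x})"
        using h SS_char[OF e] by (auto simp: le_Suc_eq)
    next
      assume h: "x \<in> insert k (insert (Suc m) {x \<in> SS e. last e \<le> x})"
      show "x \<le> Suc m \<and> okk e x \<and> (\<forall>i<m. e!i > k \<longrightarrow> e!i \<le> x \<or> x = k)"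
      proof (cases "x = k")
        case True then show ?thesis using kS by auto
      next
        case F1: False
        show ?thesis
        proof (cases "x = Suc m")
          case True
          then show ?thesis using okk_big[OF e, of x] I_elem_le[OF e]
            by (metis Suc_n_not_le_n le_eq_less_or_eq le_trans linorder_le_less_linear order_refl)
        next
          case False
          then have "x \<in> SS e" "last e \<le> x" using h F1 by auto
          then show ?thesis using SS_char[OF e] small by (auto intro: le_trans)
        qed
      qed
    qed
    finally show "x \<in> SS (e@[k]) \<longleftrightarrow> x \<in> insert k (insert (Suc m) {x \<in> SS e. last e \<le> x})" .
  qed
qed


definition PP :: "nat list \<Rightarrow> nat" where "PP e = card {k \<in> SS e. last e < k}"
definition QQ :: "nat list \<Rightarrow> nat" where "QQ e = card {k \<in> SS e. k \<le> last e}"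

lemma par_p_eq: "par_p e = PP e"
  unfolding par_p_def PP_def SS_def by (rule arg_cong[where f=card]) auto
lemma par_q_eq: "par_q e = QQ e"
  unfolding par_q_def QQ_def SS_def by (rule arg_cong[where f=card]) auto

lemma PQ_sum: "PP e + QQ e = card (SS e)"
proof -
  have "SS e = {k \<in> SS e. last e < k} \<union> {k \<in> SS e. k \<le> last e}" by auto
  then have "card (SS e) = card ({k \<in> SS e. last e < k} \<union> {k \<in> SS e. k \<le> last e})" by simp
  also have "\<dots> = PP e + QQ e" unfolding PP_def QQ_def
    by (rule card_Un_disjoint) (use SS_fin in auto)
  finally show ?thesis by simp
qed

lemma SS_le: "e \<in> I201_210 m \<Longrightarrow> x \<in> SS e \<Longrightarrow> x \<le> m"
  using SS_char by auto

lemma PP_pos: assumes e: "e \<in> I201_210 m" and m: "m \<ge> 1" shows "PP e \<ge> 1"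
proof -
  have "m \<in> {k \<in> SS e. last e < k}" using m_in_SS[OF e] last_lt[OF e m] by auto
  then have "{k \<in> SS e. last e < k} \<noteq> {}" by auto
  moreover have "finite {k \<in> SS e. last e < k}" using SS_fin by simp
  ultimately have "card {k \<in> SS e. last e < k} > 0" by (simp only: card_gt_0_iff) simp
  then show ?thesis unfolding PP_def by simp
qed

lemma QQ_pos: assumes e: "e \<in> I201_210 m" and m: "m \<ge> 1" shows "QQ e \<ge> 1"
proof -
  have "last e \<in> {k \<in> SS e. k \<le> last e}" using last_in_SS[OF e m] by auto
  then have "{k \<in> SS e. k \<le> last e} \<noteq> {}" by auto
  moreover have "finite {k \<in> SS e. k \<le> last e}" using SS_fin by simp
  ultimately have "card {k \<in> SS e. k \<le> last e} > 0" by (simp only: card_gt_0_iff) simp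
  then show ?thesis unfolding QQ_def by simp
qed

lemma child_ge_params:
  assumes e: "e \<in> I201_210 m" and m: "m \<ge> 1" and k: "k \<in> SS e" and ak: "last e \<le> k"
  shows "QQ (e@[k]) = card {x \<in> SS e. x \<le> k}"
    and "PP (e@[k]) = Suc (card (SS e)) - card {x \<in> SS e. x \<le> k}"
proof -
  have S: "SS (e@[k]) = insert (Suc m) (SS e)" using SS_child_ge[OF e m k ak] .
  have km: "k \<le> m" using SS_le[OF e k] .
  have nin: "Suc m \<notin> SS e" using SS_le[OF e, of "Suc m"] by auto
  have "{x \<in> SS (e@[k]). x \<le> last (e@[k])} = {x \<in> SS e. x \<le> k}" using S km by auto
  then show Q: "QQ (e@[k]) = card {x \<in> SS e. x \<le> k}" unfolding QQ_def by simp
  have "card (SS (e@[k])) = Suc (card (SS e))" using S nin SS_fin by simp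
  then show "PP (e@[k]) = Suc (card (SS e)) - card {x \<in> SS e. x \<le> k}"
    using PQ_sum[of "e@[k]"] Q by simp
qed

lemma child_lt_params:
  assumes e: "e \<in> I201_210 m" and m: "m \<ge> 1" and k: "k \<in> SS e" and ak: "k < last e"
  shows "QQ (e@[k]) = 1" and "PP (e@[k]) = PP e + 2"
proof -
  have S: "SS (e@[k]) = insert k (insert (Suc m) {x \<in> SS e. last e \<le> x})" using SS_child_lt[OF e m k ak] .
  have km: "k \<le> m" using SS_le[OF e k] .
  have "{x \<in> SS (e@[k]). x \<le> last (e@[k])} = {k}" using S km ak by auto
  then show "QQ (e@[k]) = 1" unfolding QQ_def by simp
  have nin: "Suc m \<notin> SS e" using SS_le[OF e, of "Suc m"] by auto
  have A: "{x \<in> SS (e@[k]). last (e@[k]) < x} = insert (Suc m) {x \<in> SS e. last e \<le> x}"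
    using S km ak by auto
  have B: "{x \<in> SS e. last e \<le> x} = insert (last e) {x \<in> SS e. last e < x}"
    using last_in_SS[OF e m] by auto
  have fin: "finite {x \<in> SS e. last e < x}" using SS_fin by simp
  have "card {x \<in> SS e. last e \<le> x} = Suc (PP e)" unfolding B PP_def using fin by simp
  moreover have "card (insert (Suc m) {x \<in> SS e. last e \<le> x}) = Suc (card {x \<in> SS e. last e \<le> x})"
    using nin SS_fin by simp
  ultimately have "card {x \<in> SS (e@[k]). last (e@[k]) < x} = PP e + 2" unfolding A by simp
  then show "PP (e@[k]) = PP e + 2" by (simp only: PP_def)
qed


lemma geom:
  fixes u v :: real
  shows "(\<Sum>j\<in>{Q..P+Q}. u^(P+Q+1-j) * v^j) * (u - v) = u * (u^(P+1) * v^Q - v^(P+Q+1))"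
proof (induction P)
  case 0
  then show ?case by (simp add: algebra_simps)
next
  case (Suc P)
  have I: "{Q..Suc P+Q} = insert (Suc P + Q) {Q..P+Q}" by auto
  have "(\<Sum>j\<in>{Q..Suc P+Q}. u^(Suc P+Q+1-j) * v^j) = u * v^(Suc P+Q) + (\<Sum>j\<in>{Q..P+Q}. u^(Suc P+Q+1-j) * v^j)"
    unfolding I by simp
  also have "(\<Sum>j\<in>{Q..P+Q}. u^(Suc P+Q+1-j) * v^j) = u * (\<Sum>j\<in>{Q..P+Q}. u^(P+Q+1-j) * v^j)"
    unfolding sum_distrib_left
  proof (rule sum.cong)
    fix j assume "j \<in> {Q..P+Q}"
    then have "Suc P+Q+1-j = Suc (P+Q+1-j)" by auto
    then show "u^(Suc P+Q+1-j) * v^j = u * (u^(P+Q+1-j) * v^j)" by simp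
  qed simp
  finally have E: "(\<Sum>j\<in>{Q..Suc P+Q}. u^(Suc P+Q+1-j) * v^j) = u * v^(Suc P+Q) + u * (\<Sum>j\<in>{Q..P+Q}. u^(P+Q+1-j) * v^j)" .
  define T where "T = (\<Sum>j\<in>{Q..P+Q}. u^(P+Q+1-j) * v^j)"
  have IH: "T * (u - v) = u * (u^(P+1) * v^Q - v^(P+Q+1))" using Suc.IH unfolding T_def .
  have "(u * v^(Suc P+Q) + u * T) * (u - v) = u * v^(P+Q+1) * (u - v) + u * (T * (u - v))"
    by (simp add: algebra_simps)
  also have "\<dots> = u * v^(P+Q+1) * (u - v) + u * (u * (u^(P+1) * v^Q - v^(P+Q+1)))" using IH by simp
  also have "\<dots> = u * (u^(Suc P+1) * v^Q - v^(Suc P+Q+1))"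
    by (simp add: algebra_simps)
  finally show ?case unfolding E T_def .
qed

lemma rank_sum:
  fixes f :: "nat \<Rightarrow> real" and S :: "nat set"
  assumes fin: "finite S" and a: "a \<in> S"
  shows "(\<Sum>k\<in>{k\<in>S. a \<le> k}. f (card {x\<in>S. x \<le> k})) = (\<Sum>j\<in>{card {x\<in>S. x \<le> a}..card S}. f j)"
proof -
  define r where "r k = card {x\<in>S. x \<le> k}" for k
  define U where "U = {k\<in>S. a \<le> k}"
  have mono: "r k < r k'" if "k \<in> S" "k' \<in> S" "k < k'" for k k'
  proof -
    have s1: "{x\<in>S. x \<le> k} \<subseteq> {x\<in>S. x \<le> k'}" using that by auto
    have "k' \<in> {x\<in>S. x \<le> k'}" "k' \<notin> {x\<in>S. x \<le> k}" using that by auto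
    then have "{x\<in>S. x \<le> k} \<subset> {x\<in>S. x \<le> k'}" using s1 by blast
    then show ?thesis unfolding r_def using fin by (simp add: psubset_card_mono)
  qed
  have inj: "inj_on r U"
  proof (rule inj_onI)
    fix k k' assume "k \<in> U" "k' \<in> U" "r k = r k'"
    then show "k = k'" using mono[of k k'] mono[of k' k] unfolding U_def
      by (metis (no_types, lifting) linorder_neqE_nat mem_Collect_eq nat_less_le)
  qed
  have sub: "r ` U \<subseteq> {r a..card S}"
  proof
    fix j assume "j \<in> r ` U"
    then obtain k where k: "k \<in> S" "a \<le> k" "j = r k" unfolding U_def by auto
    have "r a \<le> r k" unfolding r_def using fin k by (intro card_mono) auto
    moreover have "r k \<le> card S" unfolding r_def using fin by (intro card_mono) auto
    ultimately show "j \<in> {r a..card S}" using k by auto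
  qed
  have cU: "card U + card {x\<in>S. x < a} = card S"
  proof -
    have "S = U \<union> {x\<in>S. x < a}" unfolding U_def by auto
    moreover have "U \<inter> {x\<in>S. x < a} = {}" unfolding U_def by auto
    ultimately show ?thesis using fin card_Un_disjoint[of U "{x\<in>S. x < a}"] unfolding U_def by auto
  qed
  have ra: "r a = Suc (card {x\<in>S. x < a})"
  proof -
    have "{x\<in>S. x \<le> a} = insert a {x\<in>S. x < a}" using a by auto
    then show ?thesis unfolding r_def using fin by simp
  qed
  have raS: "r a \<le> card S" unfolding r_def using fin by (intro card_mono) auto
  have "card (r ` U) = card {r a..card S}"
    using card_image[OF inj] cU ra raS by simp
  then have img: "r ` U = {r a..card S}"
    by (intro card_subset_eq sub) auto
  have "(\<Sum>k\<in>U. f (r k)) = (\<Sum>j\<in>r ` U. f j)" using sum.reindex[OF inj, of f] by simp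
  then show ?thesis unfolding img unfolding U_def r_def by simp
qed


lemma frac_eq:
  fixes u v :: real
  assumes u: "u \<noteq> 0" and uv: "u \<noteq> v"
  shows "(u * (u^P * v^Q) - v * (v^P * v^Q)) / (1 - v/u) = (\<Sum>j\<in>{Q..P+Q}. u^(P+Q+1-j) * v^j)"
proof -
  have d: "u - v \<noteq> 0" using uv by simp
  have "1 - v/u = (u - v)/u" using u by (simp add: field_simps)
  then have "(u * (u^P * v^Q) - v * (v^P * v^Q)) / (1 - v/u) = u * (u^(P+1) * v^Q - v^(P+Q+1)) / (u - v)"
    using u d by (simp add: field_simps power_add)
  also have "\<dots> = (\<Sum>j\<in>{Q..P+Q}. u^(P+Q+1-j) * v^j)"
    using geom[where Q=Q and P=P and u=u and v=v] d by (simp add: field_simps)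
  finally show ?thesis .
qed

lemma child_sum:
  fixes u v :: real
  assumes e: "e \<in> I201_210 m" and m: "m \<ge> 1" and u: "u \<noteq> 0" and uv: "u \<noteq> v"
  shows "(\<Sum>k\<in>SS e. u^PP(e@[k]) * v^QQ(e@[k])) =
    (u * (u^PP e * v^QQ e) - v * (v^PP e * v^QQ e)) / (1 - v/u) + u^2 * v * (real (QQ e) * u^PP e - u^PP e)"
proof -
  define S where "S = SS e"
  define a where "a = last e"
  define P where "P = PP e"
  define Q where "Q = QQ e"
  define L where "L = {k\<in>S. k < a}"
  define U where "U = {k\<in>S. a \<le> k}"
  have fin: "finite S" unfolding S_def using SS_fin .
  have aS: "a \<in> S" unfolding a_def S_def using last_in_SS[OF e m] .
  have SLU: "S = L \<union> U" "L \<inter> U = {}" unfolding L_def U_def by auto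
  have finL: "finite L" "finite U" unfolding L_def U_def using fin by auto
  have split: "(\<Sum>k\<in>S. u^PP(e@[k]) * v^QQ(e@[k])) = (\<Sum>k\<in>L. u^PP(e@[k]) * v^QQ(e@[k])) + (\<Sum>k\<in>U. u^PP(e@[k]) * v^QQ(e@[k]))"
    unfolding SLU(1) using finL SLU(2) by (rule sum.union_disjoint)
  have QL: "Q = Suc (card L)"
  proof -
    have "{k\<in>S. k \<le> a} = insert a L" unfolding L_def using aS by auto
    moreover have "a \<notin> L" unfolding L_def by auto
    ultimately show ?thesis unfolding Q_def QQ_def S_def[symmetric] a_def[symmetric] using finL by simp
  qed
  have sumL: "(\<Sum>k\<in>L. u^PP(e@[k]) * v^QQ(e@[k])) = real (card L) * (u^(P+2) * v)"
  proof -
    have "(\<Sum>k\<in>L. u^PP(e@[k]) * v^QQ(e@[k])) = (\<Sum>k\<in>L. u^(P+2) * v)"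
    proof (rule sum.cong)
      fix k assume k: "k \<in> L"
      then have kS: "k \<in> SS e" and ka: "k < last e" unfolding L_def S_def a_def by auto
      show "u^PP(e@[k]) * v^QQ(e@[k]) = u^(P+2) * v"
        using child_lt_params[OF e m kS ka] unfolding P_def by simp
    qed simp
    then show ?thesis by simp
  qed
  have cardS: "card S = P + Q" unfolding S_def P_def Q_def using PQ_sum by simp
  have sumU: "(\<Sum>k\<in>U. u^PP(e@[k]) * v^QQ(e@[k])) = (\<Sum>j\<in>{Q..P+Q}. u^(P+Q+1-j) * v^j)"
  proof -
    have "(\<Sum>k\<in>U. u^PP(e@[k]) * v^QQ(e@[k])) = (\<Sum>k\<in>U. (\<lambda>j. u^(Suc (card S) - j) * v^j) (card {x\<in>S. x \<le> k}))"
    proof (rule sum.cong)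
      fix k assume k: "k \<in> U"
      then have kS: "k \<in> SS e" and ka: "last e \<le> k" unfolding U_def S_def a_def by auto
      show "u^PP(e@[k]) * v^QQ(e@[k]) = (\<lambda>j. u^(Suc (card S) - j) * v^j) (card {x\<in>S. x \<le> k})"
        using child_ge_params[OF e m kS ka] unfolding S_def by simp
    qed simp
    also have "\<dots> = (\<Sum>j\<in>{card {x\<in>S. x \<le> a}..card S}. u^(Suc (card S) - j) * v^j)"
      unfolding U_def by (rule rank_sum[OF fin aS])
    also have "card {x\<in>S. x \<le> a} = Q" unfolding Q_def QQ_def S_def a_def ..
    finally show ?thesis unfolding cardS by simp
  qed
  have "(\<Sum>k\<in>SS e. u^PP(e@[k]) * v^QQ(e@[k])) = real (card L) * (u^(P+2) * v) + (\<Sum>j\<in>{Q..P+Q}. u^(P+Q+1-j) * v^j)"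
    using split sumL sumU unfolding S_def by simp
  also have "\<dots> = (u * (u^P * v^Q) - v * (v^P * v^Q)) / (1 - v/u) + u^2 * v * (real Q * u^P - u^P)"
    unfolding frac_eq[OF u uv] QL by (simp add: algebra_simps power_add power2_eq_square)
  finally show ?thesis unfolding P_def Q_def .
qed


lemma I_fin: "finite (I201_210 n)"
proof -
  have "I201_210 n \<subseteq> {xs. set xs \<subseteq> {..n} \<and> length xs = n}"
  proof
    fix e assume e: "e \<in> I201_210 n"
    have "\<forall>x\<in>set e. x \<le> n"
    proof
      fix x assume "x \<in> set e"
      then obtain i where "i < length e" "e!i = x" by (auto simp: in_set_conv_nth)
      then show "x \<le> n" using I_elem_le[OF e, of i] I_len[OF e] by simp
    qed
    then show "e \<in> {xs. set xs \<subseteq> {..n} \<and> length xs = n}" using I_len[OF e] by auto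
  qed
  moreover have "finite {xs. set xs \<subseteq> {..n::nat} \<and> length xs = n}"
    by (rule finite_lists_length_eq) simp
  ultimately show ?thesis using finite_subset by blast
qed

lemma I_Suc: "I201_210 (Suc m) = (\<lambda>(e,k). e@[k]) ` (SIGMA e:I201_210 m. SS e)"
proof
  show "(\<lambda>(e,k). e@[k]) ` (SIGMA e:I201_210 m. SS e) \<subseteq> I201_210 (Suc m)"
    using child_I by auto
next
  show "I201_210 (Suc m) \<subseteq> (\<lambda>(e,k). e@[k]) ` (SIGMA e:I201_210 m. SS e)"
  proof
    fix x assume x: "x \<in> I201_210 (Suc m)"
    have lx: "length x = Suc m" using I_len[OF x] .
    then have ne: "x \<noteq> []" by auto
    have xe: "x = butlast x @ [last x]" using ne by simp
    have lb: "length (butlast x) = m" using lx by simp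
    have "butlast x @ [last x] \<in> I201_210 (Suc (length (butlast x)))" using x xe lb by simp
    then have "butlast x \<in> I201_210 (length (butlast x))" "last x \<in> SS (butlast x)"
      using app_iff[of "butlast x" "last x"] unfolding SS_def by blast+
    then have "butlast x \<in> I201_210 m" "last x \<in> SS (butlast x)" using lb by auto
    then show "x \<in> (\<lambda>(e,k). e@[k]) ` (SIGMA e:I201_210 m. SS e)"
      using xe by (intro image_eqI[of _ _ "(butlast x, last x)"]) auto
  qed
qed

lemma inj_app: "inj_on (\<lambda>(e,k). e@[k]) A"
  by (rule inj_onI) auto

lemma fn_eq: "m \<ge> 1 \<Longrightarrow> fn m u v = (\<Sum>e\<in>I201_210 m. u^PP e * v^QQ e)"
proof -
  assume m: "m \<ge> 1"
  have "{e \<in> I201_210 m. par_p e \<ge> 1 \<and> par_q e \<ge> 1} = I201_210 m"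
    using PP_pos[OF _ m] QQ_pos[OF _ m] unfolding par_p_eq par_q_eq by auto
  then show ?thesis unfolding fn_def par_p_eq par_q_eq by simp
qed

lemma deriv_sum_pow:
  fixes c :: "'b \<Rightarrow> real"
  shows "deriv (\<lambda>w. \<Sum>e\<in>A. c e * w^(q e)) 1 = (\<Sum>e\<in>A. c e * real (q e))"
proof -
  have "((\<lambda>w. \<Sum>e\<in>A. c e * w^(q e)) has_field_derivative (\<Sum>e\<in>A. c e * (real (q e) * 1^(q e - Suc 0)))) (at 1)"
    by (intro DERIV_sum DERIV_cmult DERIV_pow)
  then show ?thesis by (simp add: DERIV_imp_deriv)
qed

theorem proposition4p6:
  shows "(\<forall>u v. fn 1 u v = u * v) \<and>
    (\<forall>n \<ge> 2. \<forall>u v :: real. u \<noteq> 0 \<longrightarrow> u \<noteq> v \<longrightarrow>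
       fn n u v = (u * fn (n - 1) u v - v * fn (n - 1) v v) / (1 - v / u)
                  + u ^ 2 * v * (deriv (\<lambda>w. fn (n - 1) u w) 1 - fn (n - 1) u 1))"
proof
  have I0: "I201_210 0 = {[]}" unfolding I201_210_def inv_seq_def avoids_201_210_def by auto
  have I1: "I201_210 1 = {[0]}"
  proof -
    have "I201_210 (Suc 0) = (\<lambda>(e,k). e@[k]) ` (SIGMA e:I201_210 0. SS e)" by (rule I_Suc)
    moreover have "SS [] = {0}" unfolding SS_def using app_iff[of "[]"] I0 unfolding okk_def by auto
    then have "(SIGMA e:{[]}. SS e) = {([],0)}" by auto
    ultimately show ?thesis using I0 by simp
  qed
  have S0: "SS [0] = {0, 1}"
    using SS_char[of "[0]" 1] I1 unfolding okk_def by auto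
  have "{k \<in> {0,1::nat}. last [0::nat] < k} = {1}" by auto
  then have "PP [0] = 1" unfolding PP_def S0 by simp
  moreover have "{k \<in> {0,1::nat}. k \<le> last [0::nat]} = {0}" by auto
  then have "QQ [0] = 1" unfolding QQ_def S0 by simp
  ultimately show "\<forall>u v. fn 1 u v = u * v" using fn_eq[of 1] I1 by simp
next
  show "\<forall>n \<ge> 2. \<forall>u v :: real. u \<noteq> 0 \<longrightarrow> u \<noteq> v \<longrightarrow>
       fn n u v = (u * fn (n - 1) u v - v * fn (n - 1) v v) / (1 - v / u)
                  + u ^ 2 * v * (deriv (\<lambda>w. fn (n - 1) u w) 1 - fn (n - 1) u 1)"
  proof (intro allI impI)
    fix n :: nat and u v :: real
    assume n: "n \<ge> 2" and u: "u \<noteq> 0" and uv: "u \<noteq> v"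
    define m where "m = n - 1"
    have m: "m \<ge> 1" and nm: "n = Suc m" using n unfolding m_def by auto
    have fin: "finite (I201_210 m)" by (rule I_fin)
    have "fn n u v = (\<Sum>x\<in>I201_210 (Suc m). u^PP x * v^QQ x)" using fn_eq[of n] n nm by simp
    also have "\<dots> = (\<Sum>x\<in>(\<lambda>(e,k). e@[k]) ` (SIGMA e:I201_210 m. SS e). u^PP x * v^QQ x)"
      unfolding I_Suc ..
    also have "\<dots> = (\<Sum>(e,k)\<in>(SIGMA e:I201_210 m. SS e). u^PP (e@[k]) * v^QQ (e@[k]))"
      by (subst sum.reindex[OF inj_app]) (simp add: case_prod_unfold)
    also have "\<dots> = (\<Sum>e\<in>I201_210 m. \<Sum>k\<in>SS e. u^PP (e@[k]) * v^QQ (e@[k]))"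
      by (rule sum.Sigma[symmetric]) (use fin SS_fin in auto)
    also have "\<dots> = (\<Sum>e\<in>I201_210 m. (u * (u^PP e * v^QQ e) - v * (v^PP e * v^QQ e)) / (1 - v/u)
                        + u^2 * v * (real (QQ e) * u^PP e - u^PP e))"
      by (rule sum.cong) (use child_sum[OF _ m u uv] in auto)
    also have "\<dots> = (u * fn m u v - v * fn m v v) / (1 - v / u)
                  + u ^ 2 * v * (deriv (\<lambda>w. fn m u w) 1 - fn m u 1)"
    proof -
      have d: "deriv (\<lambda>w. fn m u w) 1 = (\<Sum>e\<in>I201_210 m. u^PP e * real (QQ e))"
      proof -
        have "(\<lambda>w. fn m u w) = (\<lambda>w. \<Sum>e\<in>I201_210 m. u^PP e * w^QQ e)"
          using fn_eq[OF m] by auto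
        then show ?thesis using deriv_sum_pow[where c="\<lambda>e. u^PP e" and A="I201_210 m" and q=QQ] by simp
      qed
      have A1: "fn m u v = (\<Sum>e\<in>I201_210 m. u^PP e * v^QQ e)" using fn_eq[OF m] .
      have A2: "fn m v v = (\<Sum>e\<in>I201_210 m. v^PP e * v^QQ e)" using fn_eq[OF m] .
      have A3: "fn m u 1 = (\<Sum>e\<in>I201_210 m. u^PP e)" using fn_eq[OF m] by simp
      show ?thesis unfolding d A1 A2 A3
        by (simp add: sum_distrib_left sum_subtractf sum.distrib sum_divide_distrib algebra_simps) (simp add: sum_divide_distrib[symmetric] sum_subtractf)
    qed
    finally show "fn n u v = (u * fn (n - 1) u v - v * fn (n - 1) v v) / (1 - v / u)
                  + u ^ 2 * v * (deriv (\<lambda>w. fn (n - 1) u w) 1 - fn (n - 1) u 1)"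
      unfolding m_def .
  qed
qed

end
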